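(* Let $\mathbf d=(d_1,\ldots,d_n)$ be a degree sequence and $g_n$ as defined below. Then for every $v\in[n]$ and every integer $k$ with $2\le k\le n-2$, \[\frac{n-k}{n-k+(k+1)d_v}\,g_n(k+1)\ \le\ \mathbb P(\mathfrak s_n(v)>k)\ \le\ \frac{n-k+1}{n-k+1+k d_v}\,g_n(k).\]
   Context: A degree sequence is $\mathbf d=(d_1,\ldots,d_n)\in\mathbb N_0^n$ with $\sum_j d_j=n$. Let $\mathfrak F(\mathbf d)=\{f:[n]\to[n]: |f^{-1}(\{i\})|=d_i\ \forall i\}$ and let $F$ be uniform on $\mathfrak F(\mathbf d)$. The six-length is $\mathfrak s_f(v)=\min\{k\in\mathbb N: f^{(k)}(v)\in\{f^{(j)}(v):0\le j\le k-1\}\}$ ($f^{(k)}$ the $k$-fold composition, $f^{(0)}=\mathrm{id}$); $\mathfrak s_n(v)=\mathfrak s_F(v)$. $\langle n\rangle_k=n!/(n-k)!$ and $g_n(k)=\frac{k!}{\langle n\rangle_k}\sum_{1\le i_1<\cdots<i_k\le n}\prod_{j=1}^k d_{i_j}$. *)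

theory Defs
  imports "HOL-Probability.Probability"
begin

(* Functions [n] -> [n] are represented extensionally (PiE over {1..n});
   the degree sequence d :: nat => nat matters only on {1..n}. *)

definition degree_seq :: "nat \<Rightarrow> (nat \<Rightarrow> nat) \<Rightarrow> bool" where
  "degree_seq n d \<longleftrightarrow> (\<Sum>j\<in>{1..n}. d j) = n"

definition Fd :: "nat \<Rightarrow> (nat \<Rightarrow> nat) \<Rightarrow> (nat \<Rightarrow> nat) set" where
  "Fd n d = {f \<in> {1..n} \<rightarrow>\<^sub>E {1..n}. \<forall>i\<in>{1..n}. card {j\<in>{1..n}. f j = i} = d i}"

definition six_length :: "(nat \<Rightarrow> nat) \<Rightarrow> nat \<Rightarrow> nat" where
  "six_length f v = (LEAST k. k \<ge> 1 \<and> (f ^^ k) v \<in> {(f ^^ j) v | j. j \<le> k - 1})"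

definition falling :: "nat \<Rightarrow> nat \<Rightarrow> real" where
  "falling n k = fact n / fact (n - k)"

definition g_n :: "nat \<Rightarrow> (nat \<Rightarrow> nat) \<Rightarrow> nat \<Rightarrow> real" where
  "g_n n d k = fact k / falling n k *
     (\<Sum>S\<in>{S. S \<subseteq> {1..n} \<and> card S = k}. \<Prod>i\<in>S. real (d i))"

definition prob_six_gt :: "nat \<Rightarrow> (nat \<Rightarrow> nat) \<Rightarrow> nat \<Rightarrow> nat \<Rightarrow> real" where
  "prob_six_gt n d v k =
     measure_pmf.prob (pmf_of_set (Fd n d)) {f. six_length f v > k}"

end

theory Submission
  imports Defs "HOL-Combinatorics.Multiset_Permutations"
begin

definition FdG :: "nat set \<Rightarrow> nat set \<Rightarrow> (nat \<Rightarrow> nat) \<Rightarrow> (nat \<Rightarrow> nat) set" where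
  "FdG A B d = {f \<in> A \<rightarrow>\<^sub>E B. \<forall>i\<in>B. card {j\<in>A. f j = i} = d i}"

lemma Fd_eq: "Fd n d = FdG {1..n} {1..n} d"
  unfolding Fd_def FdG_def by simp

lemma finite_FdG: "finite A \<Longrightarrow> finite B \<Longrightarrow> finite (FdG A B d)"
  unfolding FdG_def by (rule finite_subset[OF _ finite_PiE[of A "\<lambda>_. B"]]) auto

lemma FdG_restrict:
  assumes "f \<in> FdG A B d" "a \<in> A" "f a = b" "finite A"
  shows "f(a:=undefined) \<in> FdG (A-{a}) B (d(b := d b - 1))"
proof -
  have f: "f \<in> A \<rightarrow>\<^sub>E B" "\<And>i. i\<in>B \<Longrightarrow> card {j\<in>A. f j = i} = d i"
    using assms(1) unfolding FdG_def by auto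
  have "f(a:=undefined) \<in> (A-{a}) \<rightarrow>\<^sub>E B" using f(1) by (auto simp: PiE_def extensional_def)
  moreover have "card {j\<in>A-{a}. (f(a:=undefined)) j = i} = (d(b := d b - 1)) i" if "i \<in> B" for i
  proof -
    have e: "{j\<in>A-{a}. (f(a:=undefined)) j = i} = {j\<in>A. f j = i} - {a}" by auto
    show ?thesis
    proof (cases "i = b")
      case True
      then show ?thesis unfolding e using f(2)[OF that] assms by (simp add: card_Diff_singleton)
    next
      case False
      then have "{j\<in>A. f j = i} - {a} = {j\<in>A. f j = i}" using assms by auto
      then show ?thesis unfolding e using f(2)[OF that] False by simp
    qed
  qed
  ultimately show ?thesis unfolding FdG_def by blast
qed

lemma FdG_extend:
  assumes "g \<in> FdG (A-{a}) B (d(b := d b - 1))" "a \<in> A" "b \<in> B" "d b \<ge> 1" "finite A"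
  shows "g(a:=b) \<in> FdG A B d"
proof -
  have g: "g \<in> (A-{a}) \<rightarrow>\<^sub>E B" "\<And>i. i\<in>B \<Longrightarrow> card {j\<in>A-{a}. g j = i} = (d(b := d b - 1)) i"
    using assms(1) unfolding FdG_def by auto
  have "g(a:=b) \<in> A \<rightarrow>\<^sub>E B" using g(1) assms by (auto simp: PiE_def extensional_def)
  moreover have "card {j\<in>A. (g(a:=b)) j = i} = d i" if "i \<in> B" for i
  proof (cases "i = b")
    case True
    then have e: "{j\<in>A. (g(a:=b)) j = i} = insert a {j\<in>A-{a}. g j = i}" using assms by auto
    have "finite {j\<in>A-{a}. g j = i}" using assms by auto
    then show ?thesis unfolding e using g(2)[OF that] True assms by simp
  next
    case False
    then have e: "{j\<in>A. (g(a:=b)) j = i} = {j\<in>A-{a}. g j = i}" by auto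
    show ?thesis unfolding e using g(2)[OF that] False by simp
  qed
  ultimately show ?thesis unfolding FdG_def by blast
qed

lemma card_FdG_fix:
  assumes "a \<in> A" "b \<in> B" "d b \<ge> 1" "finite A"
  shows "card {f\<in>FdG A B d. f a = b} = card (FdG (A-{a}) B (d(b := d b - 1)))"
proof (rule bij_betw_same_card[of "\<lambda>f. f(a:=undefined)"], rule bij_betw_byWitness[where f'="\<lambda>g. g(a:=b)"])
  show "\<forall>f\<in>{f \<in> FdG A B d. f a = b}. f(a := undefined, a := b) = f" by auto
  show "\<forall>g\<in>FdG (A - {a}) B (d(b := d b - 1)). g(a := b, a := undefined) = g"
    unfolding FdG_def by (auto simp: PiE_def extensional_def fun_eq_iff)
  show "(\<lambda>f. f(a := undefined)) ` {f \<in> FdG A B d. f a = b} \<subseteq> FdG (A - {a}) B (d(b := d b - 1))"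
    using FdG_restrict assms by blast
  show "(\<lambda>g. g(a := b)) ` FdG (A - {a}) B (d(b := d b - 1)) \<subseteq> {f \<in> FdG A B d. f a = b}"
    using FdG_extend assms by auto
qed

definition tsw :: "nat \<Rightarrow> nat \<Rightarrow> nat \<Rightarrow> nat" where
  "tsw a a' x = (if x = a then a' else if x = a' then a else x)"

lemma card_fix_le:
  assumes "a \<in> A" "a' \<in> A" "finite A" "finite B"
  shows "card {f\<in>FdG A B d. f a = b} \<le> card {f\<in>FdG A B d. f a' = b}"
proof (rule card_inj_on_le[of "\<lambda>f. f \<circ> tsw a a'"])
  show "finite {f \<in> FdG A B d. f a' = b}" using finite_FdG assms by auto
  have tt: "tsw a a' (tsw a a' x) = x" for x unfolding tsw_def by auto
  show "inj_on (\<lambda>f. f \<circ> tsw a a') {f \<in> FdG A B d. f a = b}"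
  proof (rule inj_onI)
    fix f g :: "nat \<Rightarrow> nat" assume "f \<circ> tsw a a' = g \<circ> tsw a a'"
    then have "f (tsw a a' (tsw a a' x)) = g (tsw a a' (tsw a a' x))" for x by (metis comp_apply)
    then show "f = g" using tt by (simp add: fun_eq_iff)
  qed
  show "(\<lambda>f. f \<circ> tsw a a') ` {f \<in> FdG A B d. f a = b} \<subseteq> {f \<in> FdG A B d. f a' = b}"
  proof (rule image_subsetI)
    fix f assume "f \<in> {f \<in> FdG A B d. f a = b}"
    then have f: "f \<in> FdG A B d" "f a = b" by auto
    have fp: "f \<in> A \<rightarrow>\<^sub>E B" "\<And>i. i\<in>B \<Longrightarrow> card {j\<in>A. f j = i} = d i"
      using f(1) unfolding FdG_def by auto
    have "f \<circ> tsw a a' \<in> A \<rightarrow>\<^sub>E B"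
      using fp(1) assms unfolding tsw_def by (auto simp: PiE_def extensional_def Pi_def)
    moreover have "card {j\<in>A. (f \<circ> tsw a a') j = i} = d i" if "i\<in>B" for i
    proof -
      have "{j\<in>A. (f \<circ> tsw a a') j = i} = tsw a a' ` {j\<in>A. f j = i}"
      proof (rule set_eqI, rule iffI)
        fix x assume "x \<in> {j\<in>A. (f \<circ> tsw a a') j = i}"
        then show "x \<in> tsw a a' ` {j\<in>A. f j = i}"
          using tt[of x] assms by (auto simp: tsw_def intro!: image_eqI[of _ _ "tsw a a' x"] split: if_splits)
      next
        fix x assume "x \<in> tsw a a' ` {j\<in>A. f j = i}"
        then show "x \<in> {j\<in>A. (f \<circ> tsw a a') j = i}" using tt assms by (auto simp: tsw_def)
      qed
      moreover have "inj_on (tsw a a') X" for X by (metis inj_onI tt)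
      ultimately show ?thesis using fp(2)[OF that] by (simp add: card_image)
    qed
    ultimately have "f \<circ> tsw a a' \<in> FdG A B d" unfolding FdG_def by blast
    moreover have "(f \<circ> tsw a a') a' = b" using f by (simp add: tsw_def)
    ultimately show "f \<circ> tsw a a' \<in> {f \<in> FdG A B d. f a' = b}" by blast
  qed
qed

lemma card_fix_eq:
  assumes "a \<in> A" "a' \<in> A" "finite A" "finite B"
  shows "card {f\<in>FdG A B d. f a = b} = card {f\<in>FdG A B d. f a' = b}"
  using card_fix_le assms by (meson antisym)

lemma card_fix_mult:
  assumes "a \<in> A" "b \<in> B" "finite A" "finite B"
  shows "card {f\<in>FdG A B d. f a = b} * card A = d b * card (FdG A B d)"
proof -
  have "(\<Sum>a'\<in>A. card {f\<in>FdG A B d. f a' = b}) = (\<Sum>a'\<in>A. card {f\<in>FdG A B d. f a = b})"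
    by (rule sum.cong) (use card_fix_eq[OF _ assms(1) _ assms(4)] assms(3) in auto)
  then have "card {f\<in>FdG A B d. f a = b} * card A = (\<Sum>a'\<in>A. card {f\<in>FdG A B d. f a' = b})"
    by simp
  also have "\<dots> = (\<Sum>a'\<in>A. \<Sum>f\<in>FdG A B d. if f a' = b then 1 else 0)"
    using finite_FdG[OF assms(3,4)] by (simp add: sum.If_cases Int_def)
  also have "\<dots> = (\<Sum>f\<in>FdG A B d. \<Sum>a'\<in>A. if f a' = b then 1 else 0)"
    by (rule sum.swap)
  also have "\<dots> = (\<Sum>f\<in>FdG A B d. d b)"
  proof (rule sum.cong)
    fix f assume "f \<in> FdG A B d"
    then have "card {j\<in>A. f j = b} = d b" using assms unfolding FdG_def by auto
    then show "(\<Sum>a'\<in>A. if f a' = b then 1 else 0) = d b"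
      using assms by (simp add: sum.If_cases Int_def)
  qed simp
  finally show ?thesis by simp
qed

fun chain :: "(nat \<Rightarrow> nat) \<Rightarrow> nat \<Rightarrow> nat list \<Rightarrow> bool" where
  "chain f a [] = True"
| "chain f a (y#ys) = (f a = y \<and> chain f y ys)"

lemma chain_cong: "\<forall>x\<in>insert a (set xs). f x = g x \<Longrightarrow> chain f a xs = chain g a xs"
  by (induction xs arbitrary: a) auto

lemma count_chain:
  assumes "finite A" "finite B" "distinct (a#xs)" "set (a#xs) \<subseteq> A" "set xs \<subseteq> B"
  shows "card {f\<in>FdG A B d. chain f a xs} * (\<Prod>i<length xs. card A - i)
         = prod_list (map d xs) * card (FdG A B d)"
  using assms
proof (induction xs arbitrary: a A d)
  case Nil
  then show ?case by simp
next
  case (Cons y ys)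
  show ?case
  proof (cases "d y = 0")
    case True
    have "{f\<in>FdG A B d. chain f a (y#ys)} = {}"
    proof (rule ccontr)
      assume "{f\<in>FdG A B d. chain f a (y#ys)} \<noteq> {}"
      then obtain f where f: "f \<in> FdG A B d" "f a = y" by auto
      then have "card {j\<in>A. f j = y} = 0" using True Cons.prems unfolding FdG_def by auto
      moreover have "a \<in> {j\<in>A. f j = y}" using f Cons.prems by auto
      ultimately show False using Cons.prems(1) by auto
    qed
    then have "card {f\<in>FdG A B d. chain f a (y#ys)} = 0" by (simp only: card.empty)
    then show ?thesis by (simp only: list.map prod_list.Cons True mult_0)
  next
    case False
    define d' where "d' = d(y := d y - 1)"
    define A' where "A' = A - {a}"
    have yB: "y \<in> B" and aA: "a \<in> A" and yA: "y \<in> A" using Cons.prems by auto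
    have anot: "a \<notin> set (y#ys)" using Cons.prems by auto
    have E: "card {f\<in>FdG A B d. chain f a (y#ys)} = card {g\<in>FdG A' B d'. chain g y ys}"
    proof (rule bij_betw_same_card[of "\<lambda>f. f(a:=undefined)"], rule bij_betw_byWitness[where f'="\<lambda>g. g(a:=y)"])
      show "\<forall>f\<in>{f \<in> FdG A B d. chain f a (y # ys)}. f(a := undefined, a := y) = f" by auto
      show "\<forall>g\<in>{g \<in> FdG A' B d'. chain g y ys}. g(a := y, a := undefined) = g"
        unfolding FdG_def A'_def by (auto simp: PiE_def extensional_def fun_eq_iff)
      show "(\<lambda>f. f(a := undefined)) ` {f \<in> FdG A B d. chain f a (y # ys)} \<subseteq> {g \<in> FdG A' B d'. chain g y ys}"
      proof (rule image_subsetI)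
        fix f assume "f \<in> {f \<in> FdG A B d. chain f a (y # ys)}"
        then have f: "f \<in> FdG A B d" "f a = y" "chain f y ys" by auto
        have "f(a:=undefined) \<in> FdG A' B d'" unfolding A'_def d'_def
          using FdG_restrict[OF f(1) aA f(2) Cons.prems(1)] .
        moreover have "chain (f(a:=undefined)) y ys" using f(3) chain_cong[of y ys "f(a:=undefined)" f] anot by auto
        ultimately show "f(a:=undefined) \<in> {g \<in> FdG A' B d'. chain g y ys}" by blast
      qed
      show "(\<lambda>g. g(a := y)) ` {g \<in> FdG A' B d'. chain g y ys} \<subseteq> {f \<in> FdG A B d. chain f a (y # ys)}"
      proof (rule image_subsetI)
        fix g assume "g \<in> {g \<in> FdG A' B d'. chain g y ys}"
        then have g: "g \<in> FdG A' B d'" "chain g y ys" by auto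
        have "g(a:=y) \<in> FdG A B d" using FdG_extend[of g A a B d y] g(1) aA yB False Cons.prems(1)
          unfolding A'_def d'_def by auto
        moreover have "chain (g(a:=y)) y ys" using g(2) chain_cong[of y ys "g(a:=y)" g] anot by auto
        ultimately show "g(a:=y) \<in> {f \<in> FdG A B d. chain f a (y # ys)}" by auto
      qed
    qed
    have IH: "card {g\<in>FdG A' B d'. chain g y ys} * (\<Prod>i<length ys. card A' - i)
         = prod_list (map d' ys) * card (FdG A' B d')"
      by (rule Cons.IH) (use Cons.prems in \<open>auto simp: A'_def\<close>)
    have md: "map d' ys = map d ys" using Cons.prems unfolding d'_def by auto
    have C: "card (FdG A' B d') * card A = d y * card (FdG A B d)"
      using card_FdG_fix[OF aA yB _ Cons.prems(1), of d] card_fix_mult[OF aA yB Cons.prems(1,2), of d] False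
      unfolding A'_def d'_def by simp
    have cA: "card A' = card A - 1" unfolding A'_def using aA Cons.prems(1) by simp
    have P: "(\<Prod>i<length (y#ys). card A - i) = card A * (\<Prod>i<length ys. card A' - i)"
      by (simp add: prod.lessThan_Suc_shift cA del: prod.lessThan_Suc)
    have "card {f\<in>FdG A B d. chain f a (y#ys)} * (\<Prod>i<length (y#ys). card A - i)
        = (card {g\<in>FdG A' B d'. chain g y ys} * (\<Prod>i<length ys. card A' - i)) * card A"
      unfolding E P by simp
    also have "\<dots> = prod_list (map d ys) * (card (FdG A' B d') * card A)" unfolding IH md by simp
    also have "\<dots> = prod_list (map d (y#ys)) * card (FdG A B d)" unfolding C by simp
    finally show ?thesis .
  qed
qed

lemma FdG_nonempty:
  assumes "finite A" "finite B" "(\<Sum>b\<in>B. d b) = card A"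
  shows "FdG A B d \<noteq> {}"
  using assms
proof (induction A arbitrary: d rule: finite_induct)
  case empty
  then have "\<forall>b\<in>B. d b = 0" by simp
  then have "(\<lambda>_. undefined) \<in> FdG {} B d" unfolding FdG_def by auto
  then show ?case by blast
next
  case (insert a A)
  have "\<exists>b\<in>B. d b > 0"
  proof (rule ccontr)
    assume "\<not> (\<exists>b\<in>B. d b > 0)"
    then have "(\<Sum>b\<in>B. d b) = 0" by simp
    then show False using insert by simp
  qed
  then obtain b where b: "b \<in> B" "d b \<ge> 1" by auto
  define d' where "d' = d(b := d b - 1)"
  have s1: "(\<Sum>b\<in>B. d b) = d b + (\<Sum>c\<in>B-{b}. d c)" using b insert.prems by (simp add: sum.remove)
  have s2: "(\<Sum>c\<in>B. d' c) = d' b + (\<Sum>c\<in>B-{b}. d' c)" using b insert.prems by (simp add: sum.remove)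
  have s3: "(\<Sum>c\<in>B-{b}. d' c) = (\<Sum>c\<in>B-{b}. d c)" unfolding d'_def by (rule sum.cong) auto
  have "(\<Sum>c\<in>B. d' c) = card A" using s1 s2 s3 insert b unfolding d'_def by simp
  then obtain g where g: "g \<in> FdG A B d'" using insert.IH[of d'] insert.prems by auto
  have "g(a:=b) \<in> FdG (insert a A) B d"
    using FdG_extend[of g "insert a A" a B d b] g b insert unfolding d'_def by auto
  then show ?case by blast
qed

lemma Pmem: "(i::nat) \<le> m - 1 \<Longrightarrow> (f^^m) v = (f^^i) v \<Longrightarrow> (f^^m) v \<in> {(f^^j) v | j. j \<le> m - 1}"
  by blast

lemma six_gt_iff:
  assumes "\<And>x. x \<in> {1..n} \<Longrightarrow> f x \<in> {1..n}" "v \<in> {1..n}"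
  shows "six_length f v > k \<longleftrightarrow> distinct (map (\<lambda>i. (f^^i) v) [0..<Suc k])"
proof -
  define P where "P m \<longleftrightarrow> m \<ge> 1 \<and> (f ^^ m) v \<in> {(f ^^ j) v | j. j \<le> m - 1}" for m
  have it: "(f^^i) v \<in> {1..n}" for i by (induction i) (use assms in auto)
  have ex: "\<exists>m. P m"
  proof -
    have "(\<lambda>i. (f^^i) v) ` {0..n} \<subseteq> {1..n}" using it by auto
    then have "\<not> inj_on (\<lambda>i. (f^^i) v) {0..n}"
      using card_inj_on_le[of "\<lambda>i. (f^^i) v" "{0..n}" "{1..n}"] by auto
    then obtain i j where ij: "i \<in> {0..n}" "j \<in> {0..n}" "i \<noteq> j" "(f^^i) v = (f^^j) v"
      unfolding inj_on_def by blast
    show ?thesis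
    proof (cases "i < j")
      case True
      then have "P j" unfolding P_def using ij Pmem[of i j f v] by auto
      then show ?thesis by blast
    next
      case False
      then have "P i" unfolding P_def using ij Pmem[of j i f v] by auto
      then show ?thesis by blast
    qed
  qed
  have "six_length f v = (LEAST m. P m)" unfolding six_length_def P_def by simp
  then have "six_length f v > k \<longleftrightarrow> (\<forall>m\<le>k. \<not> P m)"
    using LeastI_ex[OF ex] Least_le[of P] by (metis le_trans not_le)
  also have "\<dots> \<longleftrightarrow> inj_on (\<lambda>i. (f^^i) v) {0..<Suc k}"
  proof
    assume H: "\<forall>m\<le>k. \<not> P m"
    show "inj_on (\<lambda>i. (f^^i) v) {0..<Suc k}"
    proof (rule inj_onI)
      fix i j assume ij: "i \<in> {0..<Suc k}" "j \<in> {0..<Suc k}" "(f^^i) v = (f^^j) v"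
      show "i = j"
      proof (rule ccontr)
        assume "i \<noteq> j"
        then consider "i < j" | "j < i" by linarith
        then show False
        proof cases
          case 1
          then have "P j" unfolding P_def using ij Pmem[of i j f v] by auto
          then show False using H ij by auto
        next
          case 2
          then have "P i" unfolding P_def using ij Pmem[of j i f v] by auto
          then show False using H ij by auto
        qed
      qed
    qed
  next
    assume I: "inj_on (\<lambda>i. (f^^i) v) {0..<Suc k}"
    show "\<forall>m\<le>k. \<not> P m"
    proof (intro allI impI notI)
      fix m assume m: "m \<le> k" "P m"
      then obtain j where j: "j \<le> m - 1" "(f^^m) v = (f^^j) v" "m \<ge> 1" unfolding P_def by auto
      then have "m = j" using I m by (auto dest: inj_onD)
      then show False using j by linarith
    qed
  qed
  also have "\<dots> \<longleftrightarrow> distinct (map (\<lambda>i. (f^^i) v) [0..<Suc k])"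
    by (simp only: distinct_map distinct_upt set_upt simp_thms)
  finally show ?thesis .
qed

lemma chain_iff: "chain f a xs \<longleftrightarrow> xs = map (\<lambda>i. (f^^Suc i) a) [0..<length xs]"
proof (induction xs arbitrary: a)
  case Nil
  then show ?case by simp
next
  case (Cons y ys)
  have "map (\<lambda>i. (f^^Suc i) a) [0..<length (y#ys)] = f a # map (\<lambda>i. (f^^Suc i) (f a)) [0..<length ys]"
    by (simp only: length_Cons map_upt_Suc) (simp add: funpow_Suc_right del: funpow.simps)
  then show ?case using Cons.IH[of y] by auto
qed

definition esym :: "(nat \<Rightarrow> nat) \<Rightarrow> nat set \<Rightarrow> nat \<Rightarrow> nat" where
  "esym d C k = (\<Sum>S\<in>{S. S \<subseteq> C \<and> card S = k}. \<Prod>i\<in>S. d i)"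

lemma finite_Lk: "finite C \<Longrightarrow> finite {xs. distinct xs \<and> length xs = k \<and> set xs \<subseteq> C}"
  by (rule finite_subset[OF _ finite_lists_length_eq[of C k]]) auto

lemma perm_sum:
  assumes "finite C"
  shows "(\<Sum>xs\<in>{xs. distinct xs \<and> length xs = k \<and> set xs \<subseteq> C}. prod_list (map d xs)) = fact k * esym d C k"
proof -
  define L where "L = {xs. distinct xs \<and> length xs = k \<and> set xs \<subseteq> C}"
  define T where "T = {S. S \<subseteq> C \<and> card S = k}"
  have fL: "finite L" unfolding L_def using finite_Lk[OF assms] .
  have fT: "finite T" unfolding T_def using assms by (auto intro!: finite_subset[of _ "Pow C"])
  have sub: "set ` L \<subseteq> T" unfolding L_def T_def by (auto simp: distinct_card)
  have "(\<Sum>xs\<in>L. prod_list (map d xs)) = (\<Sum>S\<in>T. \<Sum>xs\<in>{xs. xs \<in> L \<and> set xs = S}. prod_list (map d xs))"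
    using sum.group[OF fL fT sub, of "\<lambda>xs. prod_list (map d xs)"] by simp
  also have "\<dots> = (\<Sum>S\<in>T. fact k * (\<Prod>i\<in>S. d i))"
  proof (rule sum.cong[OF refl])
    fix S assume S: "S \<in> T"
    have fS: "finite S" using S assms unfolding T_def by (auto intro: rev_finite_subset[OF assms(1)])
    have e: "{xs. xs \<in> L \<and> set xs = S} = permutations_of_set S"
      using S unfolding L_def T_def permutations_of_set_def by (auto simp: distinct_card)
    have "(\<Sum>xs\<in>permutations_of_set S. prod_list (map d xs)) = (\<Sum>xs\<in>permutations_of_set S. \<Prod>i\<in>S. d i)"
      by (rule sum.cong[OF refl]) (auto simp: permutations_of_set_def prod.distinct_set_conv_list)
    also have "\<dots> = fact k * (\<Prod>i\<in>S. d i)" using S fS unfolding T_def by simp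
    finally show "(\<Sum>xs\<in>{xs. xs \<in> L \<and> set xs = S}. prod_list (map d xs)) = fact k * (\<Prod>i\<in>S. d i)"
      unfolding e .
  qed
  also have "\<dots> = fact k * esym d C k" unfolding esym_def T_def by (simp add: sum_distrib_left)
  finally show ?thesis unfolding L_def .
qed

lemma esym_insert:
  assumes "finite C" "v \<notin> C" "k \<ge> 1"
  shows "esym d (insert v C) k = esym d C k + d v * esym d C (k - 1)"
proof -
  define T1 where "T1 = {S. S \<subseteq> C \<and> card S = k}"
  define T0 where "T0 = {S. S \<subseteq> C \<and> card S = k - 1}"
  have fin: "finite T1" "finite T0" unfolding T1_def T0_def using assms(1)
    by (auto intro!: finite_subset[of _ "Pow C"])
  have eq: "{S. S \<subseteq> insert v C \<and> card S = k} = T1 \<union> insert v ` T0"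
  proof (rule set_eqI, rule iffI)
    fix S assume S: "S \<in> {S. S \<subseteq> insert v C \<and> card S = k}"
    show "S \<in> T1 \<union> insert v ` T0"
    proof (cases "v \<in> S")
      case True
      have "finite S" using S assms(1) finite_subset[of S "insert v C"] by auto
      then have "S - {v} \<in> T0" using S True assms unfolding T0_def
        by (auto simp: card_Diff_singleton_if)
      moreover have "S = insert v (S - {v})" using True by auto
      ultimately show ?thesis by blast
    next
      case False
      then show ?thesis using S unfolding T1_def by auto
    qed
  next
    fix S assume "S \<in> T1 \<union> insert v ` T0"
    then show "S \<in> {S. S \<subseteq> insert v C \<and> card S = k}"
    proof
      assume "S \<in> T1" then show ?thesis unfolding T1_def by auto
    next
      assume "S \<in> insert v ` T0"
      then obtain R where R: "R \<in> T0" "S = insert v R" by auto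
      have "finite R" "v \<notin> R" using R assms unfolding T0_def by (auto intro: rev_finite_subset[OF assms(1)])
      then show ?thesis using R assms unfolding T0_def by auto
    qed
  qed
  have disj: "T1 \<inter> insert v ` T0 = {}" using assms unfolding T1_def by auto
  have inj: "inj_on (insert v) T0"
  proof (rule inj_onI)
    fix X Y assume "insert v X = insert v Y"
    moreover assume "X \<in> T0" "Y \<in> T0"
    then have "v \<notin> X" "v \<notin> Y" using assms(2) unfolding T0_def by auto
    ultimately show "X = Y" by (metis Diff_insert_absorb)
  qed
  have "esym d (insert v C) k = (\<Sum>S\<in>T1. \<Prod>i\<in>S. d i) + (\<Sum>S\<in>insert v ` T0. \<Prod>i\<in>S. d i)"
    unfolding esym_def eq using fin disj by (simp add: sum.union_disjoint)
  also have "(\<Sum>S\<in>insert v ` T0. \<Prod>i\<in>S. d i) = (\<Sum>S\<in>T0. \<Prod>i\<in>insert v S. d i)"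
    using inj by (simp add: sum.reindex)
  also have "\<dots> = (\<Sum>S\<in>T0. d v * (\<Prod>i\<in>S. d i))"
  proof (rule sum.cong[OF refl])
    fix S assume "S \<in> T0"
    then have "finite S" "v \<notin> S" using assms unfolding T0_def by (auto intro: rev_finite_subset[OF assms(1)])
    then show "(\<Prod>i\<in>insert v S. d i) = d v * (\<Prod>i\<in>S. d i)" by simp
  qed
  finally show ?thesis unfolding esym_def T1_def T0_def by (simp add: sum_distrib_left)
qed

lemma newton:
  assumes "finite C" "k \<ge> 1"
  shows "k * esym d C k \<le> (sum d C - (k - 1)) * esym d C (k - 1)"
proof -
  define T1 where "T1 = {S. S \<subseteq> C \<and> card S = k}"
  define T0 where "T0 = {S. S \<subseteq> C \<and> card S = k - 1}"
  have fin: "finite T1" "finite T0" unfolding T1_def T0_def using assms(1)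
    by (auto intro!: finite_subset[of _ "Pow C"])
  have finS: "finite S" if "S \<subseteq> C" for S using that assms(1) by (rule finite_subset)
  have "k * esym d C k = (\<Sum>S\<in>T1. \<Sum>x\<in>S. \<Prod>i\<in>S. d i)"
    unfolding esym_def T1_def sum_distrib_left by (rule sum.cong[OF refl]) simp
  also have "\<dots> = (\<Sum>S\<in>T1. \<Sum>x\<in>S. d x * (\<Prod>i\<in>S-{x}. d i))"
    by (rule sum.cong[OF refl], rule sum.cong[OF refl])
       (use finS in \<open>auto simp: T1_def prod.remove\<close>)
  also have "\<dots> = (\<Sum>(S,x)\<in>Sigma T1 (\<lambda>S. S). d x * (\<Prod>i\<in>S-{x}. d i))"
    using fin finS unfolding T1_def by (subst sum.Sigma) auto
  also have "\<dots> = (\<Sum>(R,x)\<in>Sigma T0 (\<lambda>R. C - R). d x * (\<Prod>i\<in>R. d i))"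
  proof (rule sum.reindex_bij_witness[where i="\<lambda>(R,x). (insert x R, x)" and j="\<lambda>(S,x). (S-{x}, x)"])
    fix a assume "a \<in> Sigma T1 (\<lambda>S. S)"
    then show "(case case a of (S, x) \<Rightarrow> (S - {x}, x) of (R, x) \<Rightarrow> (insert x R, x)) = a" by auto
  next
    fix a assume a: "a \<in> Sigma T1 (\<lambda>S. S)"
    then obtain S x where Sx: "a = (S,x)" "S \<subseteq> C" "card S = k" "x \<in> S" unfolding T1_def by auto
    then show "(case a of (S, x) \<Rightarrow> (S - {x}, x)) \<in> Sigma T0 (\<lambda>R. C - R)"
      using finS[of S] unfolding T0_def by auto
  next
    fix b assume "b \<in> Sigma T0 (\<lambda>R. C - R)"
    then show "(case case b of (R, x) \<Rightarrow> (insert x R, x) of (S, x) \<Rightarrow> (S - {x}, x)) = b" by auto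
  next
    fix b assume "b \<in> Sigma T0 (\<lambda>R. C - R)"
    then obtain R x where Rx: "b = (R,x)" "R \<subseteq> C" "card R = k - 1" "x \<in> C" "x \<notin> R" unfolding T0_def by auto
    then show "(case b of (R, x) \<Rightarrow> (insert x R, x)) \<in> Sigma T1 (\<lambda>S. S)"
      using finS[of R] assms(2) unfolding T1_def by auto
  next
    fix a assume a: "a \<in> Sigma T1 (\<lambda>S. S)"
    then show "(case case a of (S, x) \<Rightarrow> (S - {x}, x) of (R, x) \<Rightarrow> d x * prod d R) =
          (case a of (S, x) \<Rightarrow> d x * (\<Prod>i\<in>S - {x}. d i))" by auto
  qed
  also have "\<dots> = (\<Sum>R\<in>T0. (\<Prod>i\<in>R. d i) * (\<Sum>x\<in>C-R. d x))"
    using fin finS assms(1) unfolding T0_def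
    by (subst sum.Sigma[symmetric]) (auto simp: sum_distrib_left mult.commute)
  also have "\<dots> \<le> (\<Sum>R\<in>T0. (\<Prod>i\<in>R. d i) * (sum d C - (k - 1)))"
  proof (rule sum_mono)
    fix R assume R: "R \<in> T0"
    then have fR: "finite R" "R \<subseteq> C" "card R = k - 1" using finS unfolding T0_def by auto
    have sd: "(\<Sum>x\<in>C-R. d x) = sum d C - sum d R" using fR assms(1) by (simp add: sum_diff_nat)
    show "(\<Prod>i\<in>R. d i) * (\<Sum>x\<in>C-R. d x) \<le> (\<Prod>i\<in>R. d i) * (sum d C - (k - 1))"
    proof (cases "(\<Prod>i\<in>R. d i) = 0")
      case True then show ?thesis by simp
    next
      case False
      then have "\<forall>i\<in>R. d i \<ge> 1" using fR by (simp add: Suc_le_eq)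
      then have "card R \<le> sum d R" using sum_mono[of R "\<lambda>_. 1::nat" d] by simp
      then show ?thesis unfolding sd using fR by (intro mult_left_mono) auto
    qed
  qed
  also have "\<dots> = (sum d C - (k - 1)) * esym d C (k - 1)"
    unfolding esym_def T0_def by (metis (no_types) mult.commute sum_distrib_right)
  finally show ?thesis .
qed


lemma fact_prod: "k \<le> n \<Longrightarrow> fact n = fact (n-k) * (\<Prod>i<k. n - i)"
proof (induction k)
  case 0
  then show ?case by simp
next
  case (Suc k)
  have e: "n - k = Suc (n - Suc k)" using Suc.prems by arith
  have "fact (n - k) = (n - k) * fact (n - Suc k)" unfolding e by simp
  have "fact n = fact (n-k) * (\<Prod>i<k. n-i)" using Suc by simp
  also have "\<dots> = fact (n - Suc k) * ((\<Prod>i<k. n-i) * (n-k))" unfolding \<open>fact (n - k) = _\<close> by (simp only: mult_ac)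
  also have "\<dots> = fact (n - Suc k) * (\<Prod>i<Suc k. n-i)" by simp
  finally show ?case .
qed

lemma count_six:
  assumes "v \<in> {1..n}"
  shows "card {f\<in>FdG {1..n} {1..n} d. six_length f v > k} * (\<Prod>i<k. n - i)
       = fact k * esym d ({1..n}-{v}) k * card (FdG {1..n} {1..n} d)"
proof -
  define F where "F = FdG {1..n} {1..n} d"
  define C where "C = {1..n} - {v}"
  define L where "L = {xs. distinct xs \<and> length xs = k \<and> set xs \<subseteq> C}"
  define path where "path f = map (\<lambda>i. (f^^Suc i) v) [0..<k]" for f :: "nat \<Rightarrow> nat"
  have fF: "finite F" unfolding F_def by (rule finite_FdG) auto
  have fL: "finite L" unfolding L_def C_def by (rule finite_Lk) auto
  have maps: "f x \<in> {1..n}" if "f \<in> F" "x \<in> {1..n}" for f x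
    using that unfolding F_def FdG_def by (auto simp: PiE_def Pi_def)
  have it: "(f^^i) v \<in> {1..n}" if "f \<in> F" for f i
    by (induction i) (use assms maps[OF that] in auto)
  have six_iff: "six_length f v > k \<longleftrightarrow> path f \<in> L" if f: "f \<in> F" for f
  proof -
    have "six_length f v > k \<longleftrightarrow> distinct (map (\<lambda>i. (f^^i) v) [0..<Suc k])"
      by (rule six_gt_iff[OF maps[OF f] assms])
    also have "map (\<lambda>i. (f^^i) v) [0..<Suc k] = v # path f"
      unfolding path_def by (simp only: map_upt_Suc) simp
    also have "distinct (v # path f) \<longleftrightarrow> path f \<in> L"
      using it[OF f] unfolding L_def C_def path_def by (force simp del: funpow.simps simp: image_iff)
    finally show ?thesis .
  qed
  have S_eq: "{f\<in>F. six_length f v > k} = {f\<in>F. path f \<in> L}" using six_iff by auto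
  have fib: "{f. f \<in> {f\<in>F. path f \<in> L} \<and> path f = xs} = {f\<in>F. chain f v xs}" if "xs \<in> L" for xs
  proof -
    have "chain f v xs \<longleftrightarrow> path f = xs" for f
      unfolding chain_iff path_def using that unfolding L_def by auto
    then show ?thesis using that by auto
  qed
  have "card {f\<in>F. path f \<in> L} = (\<Sum>f\<in>{f\<in>F. path f \<in> L}. 1)" by simp
  also have "\<dots> = (\<Sum>xs\<in>L. \<Sum>f\<in>{f. f \<in> {f\<in>F. path f \<in> L} \<and> path f = xs}. 1)"
    by (rule sum.group[symmetric]) (use fF fL in auto)
  also have "\<dots> = (\<Sum>xs\<in>L. card {f\<in>F. chain f v xs})"
  proof (rule sum.cong[OF refl])
    fix xs assume "xs \<in> L"
    show "(\<Sum>f\<in>{f. f \<in> {f\<in>F. path f \<in> L} \<and> path f = xs}. 1) = card {f\<in>F. chain f v xs}"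
      unfolding fib[OF \<open>xs \<in> L\<close>] by simp
  qed
  finally have c: "card {f\<in>F. path f \<in> L} = (\<Sum>xs\<in>L. card {f\<in>F. chain f v xs})" .
  have "card {f\<in>F. path f \<in> L} * (\<Prod>i<k. n - i) = (\<Sum>xs\<in>L. card {f\<in>F. chain f v xs} * (\<Prod>i<k. n - i))"
    unfolding c by (simp add: sum_distrib_right)
  also have "\<dots> = (\<Sum>xs\<in>L. prod_list (map d xs) * card F)"
  proof (rule sum.cong[OF refl])
    fix xs assume xs: "xs \<in> L"
    have "card {f\<in>F. chain f v xs} * (\<Prod>i<length xs. card {1..n} - i) = prod_list (map d xs) * card F"
      unfolding F_def by (rule count_chain) (use xs assms in \<open>auto simp: L_def C_def\<close>)
    then show "card {f\<in>F. chain f v xs} * (\<Prod>i<k. n - i) = prod_list (map d xs) * card F"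
      using xs unfolding L_def by simp
  qed
  also have "\<dots> = fact k * esym d C k * card F"
    unfolding sum_distrib_right[symmetric] L_def by (subst perm_sum) (auto simp: C_def)
  finally have "card {f\<in>F. path f \<in> L} * (\<Prod>i<k. n - i) = fact k * esym d C k * card F" .
  then have "card {f\<in>F. six_length f v > k} * (\<Prod>i<k. n - i) = fact k * esym d C k * card F"
    unfolding S_eq .
  then show ?thesis unfolding F_def C_def .
qed

theorem mainTheorem6:
  fixes n k v :: nat and d :: "nat \<Rightarrow> nat"
  assumes "degree_seq n d"
    and "v \<in> {1..n}"
    and "2 \<le> k" and "k + 2 \<le> n"
  shows "real (n - k) / (real (n - k) + real (k + 1) * real (d v)) * g_n n d (k + 1)
           \<le> prob_six_gt n d v k
       \<and> prob_six_gt n d v k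
           \<le> real (n - k + 1) / (real (n - k + 1) + real k * real (d v)) * g_n n d k"
proof -
  define F where "F = FdG {1..n} {1..n} d"
  define C where "C = {1..n} - {v}"
  define p where "p = (\<Prod>i<k. n - i)"
  have dsum: "sum d {1..n} = n" using assms(1) unfolding degree_seq_def by simp
  have fF: "finite F" unfolding F_def by (rule finite_FdG) auto
  have neF: "F \<noteq> {}" unfolding F_def by (rule FdG_nonempty) (use dsum in auto)
  have NF: "card F > 0" using fF neF by (simp add: card_gt_0_iff)
  have pp: "p > 0" unfolding p_def using assms by (auto simp: prod_pos)
  have ins: "{1..n} = insert v C" "v \<notin> C" "finite C" using assms(2) unfolding C_def by auto
  have sC: "sum d C = n - d v" using dsum assms(2) unfolding C_def by (simp add: sum_diff_nat)
  have prob: "prob_six_gt n d v k = real (card {f\<in>F. six_length f v > k}) / real (card F)"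
    unfolding prob_six_gt_def Fd_eq F_def[symmetric] using fF neF
    by (simp add: measure_pmf_of_set Int_def)
  have cnt: "card {f\<in>F. six_length f v > k} * p = fact k * esym d C k * card F"
    unfolding F_def p_def C_def by (rule count_six[OF assms(2)])
  define a where "a = real (esym d C (k-1))"
  define b where "b = real (esym d C k)"
  define c where "c = real (esym d C (k+1))"
  define dv where "dv = real (d v)"
  have P: "prob_six_gt n d v k = fact k * b / real p"
  proof -
    have "real (card {f\<in>F. six_length f v > k}) * real p = fact k * b * real (card F)"
      using arg_cong[OF cnt, of real] unfolding b_def by simp
    then show ?thesis unfolding prob using NF pp by (simp add: field_simps)
  qed
  have fall: "falling n k = real p"
  proof -
    have "fact n = fact (n-k) * p" unfolding p_def by (rule fact_prod) (use assms in auto)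
    then have "(fact n :: real) = fact (n-k) * real p" by (metis of_nat_fact of_nat_mult)
    then show ?thesis unfolding falling_def by simp
  qed
  have fall1: "falling n (k+1) = real p * real (n - k)"
  proof -
    have "fact n = fact (n-(k+1)) * (\<Prod>i<k+1. n - i)" by (rule fact_prod) (use assms in auto)
    then have "fact n = fact (n-(k+1)) * (p * (n - k))" unfolding p_def by simp
    then have "(fact n :: real) = fact (n-(k+1)) * (real p * real (n - k))" by (metis of_nat_fact of_nat_mult)
    then show ?thesis unfolding falling_def by simp
  qed
  have gk: "g_n n d k = fact k / real p * (b + dv * a)"
  proof -
    have "esym d {1..n} k = esym d C k + d v * esym d C (k - 1)"
      unfolding ins(1) by (rule esym_insert) (use ins assms in auto)
    then have "real (esym d {1..n} (k)) = b + dv * a" unfolding a_def b_def c_def dv_def by simp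
    moreover have "real (esym d {1..n} (k)) = (\<Sum>S\<in>{S. S \<subseteq> {1..n} \<and> card S = k}. \<Prod>i\<in>S. real (d i))"
      unfolding esym_def by simp
    ultimately have "(\<Sum>S\<in>{S. S \<subseteq> {1..n} \<and> card S = k}. \<Prod>i\<in>S. real (d i)) = b + dv * a" by simp
    then show ?thesis unfolding g_n_def fall by simp
  qed
  have gk1: "g_n n d (k+1) = fact (k+1) / (real p * real (n - k)) * (c + dv * b)"
  proof -
    have "esym d {1..n} (k+1) = esym d C (k+1) + d v * esym d C k"
      unfolding ins(1) by (subst esym_insert) (use ins assms in auto)
    then have "real (esym d {1..n} (k+1)) = c + dv * b" unfolding a_def b_def c_def dv_def by simp
    moreover have "real (esym d {1..n} (k+1)) = (\<Sum>S\<in>{S. S \<subseteq> {1..n} \<and> card S = k+1}. \<Prod>i\<in>S. real (d i))"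
      unfolding esym_def by simp
    ultimately have "(\<Sum>S\<in>{S. S \<subseteq> {1..n} \<and> card S = k+1}. \<Prod>i\<in>S. real (d i)) = c + dv * b" by simp
    then show ?thesis unfolding g_n_def fall1 by simp
  qed
  have NA: "k * esym d C k \<le> (n - k + 1) * esym d C (k - 1)"
  proof -
    have "k * esym d C k \<le> (sum d C - (k - 1)) * esym d C (k - 1)" by (rule newton) (use ins assms in auto)
    also have "\<dots> \<le> (n - k + 1) * esym d C (k - 1)" using sC assms by (intro mult_right_mono) auto
    finally show ?thesis .
  qed
  have NB: "(k+1) * esym d C (k+1) \<le> (n - k) * esym d C k"
  proof -
    have "(k+1) * esym d C (k+1) \<le> (sum d C - (k + 1 - 1)) * esym d C (k + 1 - 1)" by (rule newton) (use ins assms in auto)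
    also have "\<dots> = (sum d C - k) * esym d C k" by simp
    also have "\<dots> \<le> (n - k) * esym d C k" using sC by (intro mult_right_mono) auto
    finally show ?thesis .
  qed
  have RA: "real k * b \<le> real (n - k + 1) * a"
    using NA unfolding a_def b_def by (metis of_nat_le_iff of_nat_mult)
  have RB: "real (k+1) * c \<le> real (n - k) * b"
    using NB unfolding c_def b_def by (metis of_nat_le_iff of_nat_mult)
  have nn: "a \<ge> 0" "b \<ge> 0" "c \<ge> 0" "dv \<ge> 0" unfolding a_def b_def c_def dv_def by auto
  have nk: "real (n - k) > 0" using assms by simp
  have fkp: "fact k / real p > 0" using pp by simp
  show ?thesis
  proof
    define D where "D = real (n - k) + real (k + 1) * dv"
    have D: "D > 0" unfolding D_def using nk nn by (simp add: add_pos_nonneg)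
    have key: "real (k+1) * (c + dv * b) \<le> D * b"
      unfolding D_def using RB nn by (simp add: algebra_simps mult_left_mono)
    have "real (n - k) / D * g_n n d (k + 1) = fact k / real p * (real (k+1) * (c + dv * b) / D)"
      unfolding gk1 using nk D pp by (simp add: field_simps)
    also have "\<dots> \<le> fact k / real p * b"
      using key D fkp by (intro mult_left_mono) (auto simp: divide_le_eq mult.commute)
    also have "\<dots> = prob_six_gt n d v k" unfolding P by simp
    finally show "real (n - k) / (real (n - k) + real (k + 1) * real (d v)) * g_n n d (k + 1)
           \<le> prob_six_gt n d v k" unfolding D_def dv_def .
  next
    define D where "D = real (n - k + 1) + real k * dv"
    have D: "D > 0" unfolding D_def using nn by (simp add: add_pos_nonneg)
    have key: "b * D \<le> real (n - k + 1) * (b + dv * a)"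
    proof -
      have "dv * (real k * b) \<le> dv * (real (n - k + 1) * a)" using RA nn by (intro mult_left_mono) auto
      then show ?thesis unfolding D_def by (simp add: algebra_simps)
    qed
    have "prob_six_gt n d v k = fact k / real p * b" unfolding P by simp
    also have "\<dots> \<le> fact k / real p * (real (n - k + 1) * (b + dv * a) / D)"
      using key D fkp by (intro mult_left_mono) (auto simp: le_divide_eq)
    also have "\<dots> = real (n - k + 1) / D * g_n n d k"
      unfolding gk using D by (simp add: field_simps)
    finally show "prob_six_gt n d v k
           \<le> real (n - k + 1) / (real (n - k + 1) + real k * real (d v)) * g_n n d k" unfolding D_def dv_def .
  qed
qed

end
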